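(* For every constant $c>0$ there is a constant $C$ such that for every $n\ge2$, every string $x$ of length $n$ and every $i\in\{1,\dots,n\}$, with probability at least $1-n^{-c}$ (over the random hash function), the number of increasing nodes on the path from the root of the DDT of $x$ to the $i$-th leaf is at most $C\log_2 n$.
   Context: Data Dependent Tree (DDT). Fix a string $x=x_1\cdots x_n$ and a hash function $h$, modeled as follows: $h$ assigns to every possible input (a character, or a finite tuple of integers) a value in a totally ordered set; equal inputs receive equal values, distinct inputs receive distinct values, and the relative order of the values of distinct inputs is uniformly random (as for a uniformly random injection), independent of $x$. The DDT of $x$ is a rooted tree built level by level. Level $0$ consists of $n$ leaves in left-to-right order, the $i$-th storing $x_i$, with hash $h(x_i)$. Levels $1,2,3,\dots$ alternate between duplicate levels (odd $\ell$) and increasing levels (even $\ell$). At a duplicate level $\ell$, the nodes of level $\ell-1$ (left to right) are partitioned into maximal runs of consecutive nodes with equal hash; each run $c_1,\dots,c_k$ becomes the ordered list of children of a new duplicate node at level $\ell$ with hash $h(\langle \ell,k,h(c_1)\rangle)$. At an increasing level $\ell$, the nodes of level $\ell-1$ are partitioned into maximal runs of consecutive nodes whose hashes are strictly increasing left to right; each run $c_1,\dots,c_k$ becomes the ordered children of a new increasing node at level $\ell$ with hash $h(\langle \ell,h(c_1),\dots,h(c_k)\rangle)$. Construction stops at the first level consisting of a single node (the root). The height is the number of levels above level $0$. The string induced by a node is the concatenation, left to right, of the characters at the leaves of its subtree. *)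

theory Defs
  imports "HOL-Probability.Probability"
begin

text \<open>Since h is injective on inputs, an input
 tuple containing the hash value h(c) of a child c is identified with the
 tuple containing the input of c itself (symbolic representation).\<close>
datatype 'a inp = Chr 'a | DupIn nat nat "'a inp" | IncIn nat "'a inp list"

datatype 'a ddt = Lf 'a | DupN nat "'a ddt list" | IncN nat "'a ddt list"

fun ddt_inp :: "'a ddt \<Rightarrow> 'a inp" where
  "ddt_inp (Lf a) = Chr a"
| "ddt_inp (DupN l []) = DupIn l 0 (IncIn l [])"
| "ddt_inp (DupN l (c # cs)) = DupIn l (Suc (length cs)) (ddt_inp c)"
| "ddt_inp (IncN l cs) = IncIn l (map ddt_inp cs)"

fun runs :: "('b \<Rightarrow> 'b \<Rightarrow> bool) \<Rightarrow> 'b list \<Rightarrow> 'b list list" where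
  "runs R [] = []"
| "runs R [x] = [[x]]"
| "runs R (x # y # xs) =
     (case runs R (y # xs) of
        r # rs \<Rightarrow> (if R x y then (x # r) # rs else [x] # r # rs)
      | [] \<Rightarrow> [[x]])"

definition ddt_step :: "('a inp \<Rightarrow> real) \<Rightarrow> nat \<Rightarrow> 'a ddt list \<Rightarrow> 'a ddt list" where
  "ddt_step h l nodes =
     (if odd l then map (DupN l) (runs (\<lambda>u v. h (ddt_inp u) = h (ddt_inp v)) nodes)
      else map (IncN l) (runs (\<lambda>u v. h (ddt_inp u) < h (ddt_inp v)) nodes))"

fun ddt_level :: "('a inp \<Rightarrow> real) \<Rightarrow> 'a list \<Rightarrow> nat \<Rightarrow> 'a ddt list" where
  "ddt_level h x 0 = map Lf x"
| "ddt_level h x (Suc l) = ddt_step h (Suc l) (ddt_level h x l)"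

definition ddt_terminates :: "('a inp \<Rightarrow> real) \<Rightarrow> 'a list \<Rightarrow> bool" where
  "ddt_terminates h x \<longleftrightarrow> (\<exists>l. length (ddt_level h x l) = 1)"

definition ddt_height :: "('a inp \<Rightarrow> real) \<Rightarrow> 'a list \<Rightarrow> nat" where
  "ddt_height h x = (LEAST l. length (ddt_level h x l) = 1)"

definition ddt_root :: "('a inp \<Rightarrow> real) \<Rightarrow> 'a list \<Rightarrow> 'a ddt" where
  "ddt_root h x = hd (ddt_level h x (ddt_height h x))"

fun nleaves :: "'a ddt \<Rightarrow> nat" where
  "nleaves (Lf a) = 1"
| "nleaves (DupN l cs) = sum_list (map nleaves cs)"
| "nleaves (IncN l cs) = sum_list (map nleaves cs)"

text \<open>Number of increasing nodes on the path from the node to its leaf with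
 0-based index i (leaves counted left to right).\<close>
fun inc_path :: "'a ddt \<Rightarrow> nat \<Rightarrow> nat"
and inc_path_list :: "'a ddt list \<Rightarrow> nat \<Rightarrow> nat" where
  "inc_path (Lf a) i = 0"
| "inc_path (DupN l cs) i = inc_path_list cs i"
| "inc_path (IncN l cs) i = Suc (inc_path_list cs i)"
| "inc_path_list [] i = 0"
| "inc_path_list (c # cs) i =
     (if i < nleaves c then inc_path c i else inc_path_list cs (i - nleaves c))"

text \<open>Random hash function: i.i.d. uniform values in [0,1] for every input;
 this gives a uniformly random relative order on every finite set of inputs
 (injective almost surely).\<close>
definition hash_space :: "('a inp \<Rightarrow> real) measure" where
  "hash_space = (\<Pi>\<^sub>M _\<in>UNIV. uniform_measure lborel {0..1})"

end

theory Submission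
  imports Defs
begin


lemma runs_concat: "concat (runs R xs) = xs"
  by (induction R xs rule: runs.induct) (auto split: list.splits)

lemma runs_nonempty: "[] \<notin> set (runs R xs)"
  by (induction R xs rule: runs.induct) (auto split: list.splits)

lemma runs_Cons_ne: "runs R (y # xs) \<noteq> []"
  using runs_concat[of R "y#xs"] by auto

lemma runs_hd: "runs R (y # xs) = r # rs \<Longrightarrow> r \<noteq> [] \<and> hd r = y"
proof -
  assume a: "runs R (y # xs) = r # rs"
  have "r \<noteq> []" using runs_nonempty[of R "y#xs"] a by auto
  moreover have "concat (r # rs) = y # xs" using runs_concat[of R "y#xs"] a by simp
  ultimately show ?thesis by (cases r) auto
qed

lemma runs_cong: "(\<And>u v. u \<in> set xs \<Longrightarrow> v \<in> set xs \<Longrightarrow> R u v = R' u v) \<Longrightarrow> runs R xs = runs R' xs"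
  by (induction R xs rule: runs.induct) (auto split: list.splits)

lemma runs_len: "length (runs R xs) - 1 = (\<Sum>j<length xs - 1. if R (xs!j) (xs!Suc j) then 0 else 1)"
proof (induction R xs rule: runs.induct)
  case (3 R x y xs)
  obtain r rs where e: "runs R (y # xs) = r # rs" using runs_Cons_ne by (metis list.exhaust)
  have "(\<Sum>j<length (x#y#xs) - 1. if R ((x#y#xs)!j) ((x#y#xs)!Suc j) then 0 else 1)
     = (if R x y then 0 else 1) + (\<Sum>j<length (y#xs) - 1. if R ((y#xs)!j) ((y#xs)!Suc j) then 0 else (1::nat))"
    by (simp add: sum.lessThan_Suc_shift del: sum.lessThan_Suc)
  moreover have "length (runs R (x#y#xs)) - 1 = (if R x y then 0 else 1) + (length (runs R (y#xs)) - 1)"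
    using e by simp
  ultimately show ?case using 3 by simp
qed auto

fun adjp :: "('b \<Rightarrow> 'b \<Rightarrow> bool) \<Rightarrow> 'b list \<Rightarrow> bool" where
  "adjp P (a # b # L) = (P a b \<and> adjp P (b # L))"
| "adjp P _ = True"

lemma runs_eq_adj: "adjp (\<lambda>r1 r2. f (hd r1) \<noteq> f (hd r2)) (runs (\<lambda>u v. f u = f v) xs)"
proof (induction "(\<lambda>u v. f u = f v)" xs rule: runs.induct)
  case (3 x y xs)
  obtain r rs where e: "runs (\<lambda>u v. f u = f v) (y # xs) = r # rs" using runs_Cons_ne by (metis list.exhaust)
  have h: "hd r = y" using runs_hd[OF e] by simp
  show ?case using 3 e h by (cases rs) auto
qed auto


fun tag :: "'a inp \<Rightarrow> nat" where
  "tag (Chr a) = 0" | "tag (DupIn l k c) = l" | "tag (IncIn l cs) = l"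

fun proc :: "('a inp \<Rightarrow> real) \<Rightarrow> nat \<Rightarrow> 'a ddt list \<Rightarrow> nat \<Rightarrow> 'a ddt list" where
  "proc h l T 0 = T"
| "proc h l T (Suc k) = ddt_step h (l + Suc k) (proc h l T k)"

lemma level_proc: "ddt_level h x (l + k) = proc h l (ddt_level h x l) k"
  by (induction k) auto

lemma proc_add: "proc h l T (ka + kb) = proc h (l + ka) (proc h l T ka) kb"
  by (induction kb) (auto simp: add.assoc)

lemma inp_tag_Dup: "tag (ddt_inp (DupN l cs)) = l"
  by (cases cs) auto

lemma step_tag: "u \<in> set (ddt_step h m T) \<Longrightarrow> tag (ddt_inp u) = m"
  by (auto simp: ddt_step_def inp_tag_Dup split: if_splits)

lemma proc_tag: "(\<forall>u\<in>set T. tag (ddt_inp u) = l) \<Longrightarrow> u \<in> set (proc h l T k) \<Longrightarrow> tag (ddt_inp u) = l + k"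
  by (induction k arbitrary: u) (auto dest: step_tag)

lemma step_cong: "(\<And>u. u \<in> set T \<Longrightarrow> h (ddt_inp u) = h' (ddt_inp u)) \<Longrightarrow> ddt_step h m T = ddt_step h' m T"
proof -
  assume a: "\<And>u. u \<in> set T \<Longrightarrow> h (ddt_inp u) = h' (ddt_inp u)"
  have 1: "runs (\<lambda>u v. h (ddt_inp u) = h (ddt_inp v)) T = runs (\<lambda>u v. h' (ddt_inp u) = h' (ddt_inp v)) T"
    by (rule runs_cong) (auto simp: a)
  have 2: "runs (\<lambda>u v. h (ddt_inp u) < h (ddt_inp v)) T = runs (\<lambda>u v. h' (ddt_inp u) < h' (ddt_inp v)) T"
    by (rule runs_cong) (auto simp: a)
  show ?thesis unfolding ddt_step_def 1 2 ..
qed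

lemma proc_cong: "(\<forall>u\<in>set T. tag (ddt_inp u) = l) \<Longrightarrow> (\<And>i. l \<le> tag i \<Longrightarrow> tag i < l + k \<Longrightarrow> h i = h' i)
   \<Longrightarrow> proc h l T k = proc h' l T k"
proof (induction k)
  case (Suc k)
  have e: "proc h l T k = proc h' l T k" using Suc by auto
  show ?case using Suc.prems proc_tag[OF Suc.prems(1), of _ h' k] e
    by (auto intro!: step_cong)
qed simp

definition stepX :: "nat \<Rightarrow> ('a ddt \<times> 'a ddt) set \<Rightarrow> 'a ddt list \<Rightarrow> 'a ddt list" where
  "stepX m X T = (if odd m then map (DupN m) (runs (\<lambda>u v. (u,v) \<in> X) T) else map (IncN m) (runs (\<lambda>u v. (u,v) \<in> X) T))"

definition Rel :: "('a inp \<Rightarrow> real) \<Rightarrow> nat \<Rightarrow> 'a ddt \<times> 'a ddt \<Rightarrow> bool" where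
  "Rel g m p = (if odd m then g (ddt_inp (fst p)) = g (ddt_inp (snd p)) else g (ddt_inp (fst p)) < g (ddt_inp (snd p)))"

lemma step_stepX: "ddt_step g m T = stepX m {p \<in> set T \<times> set T. Rel g m p} T"
proof -
  have 1: "runs (\<lambda>u v. g (ddt_inp u) = g (ddt_inp v)) T = runs (\<lambda>u v. (u, v) \<in> {p \<in> set T \<times> set T. Rel g m p}) T" if "odd m"
    by (rule runs_cong) (auto simp: Rel_def that)
  have 2: "runs (\<lambda>u v. g (ddt_inp u) < g (ddt_inp v)) T = runs (\<lambda>u v. (u, v) \<in> {p \<in> set T \<times> set T. Rel g m p}) T" if "even m"
    by (rule runs_cong) (auto simp: Rel_def that)
  show ?thesis unfolding ddt_step_def stepX_def using 1 2 by auto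
qed

lemma step_iff: "ddt_step g m T = P \<longleftrightarrow> (\<exists>X\<in>Pow (set T \<times> set T). stepX m X T = P \<and> (\<forall>p\<in>set T \<times> set T. Rel g m p = (p \<in> X)))"
proof
  assume "ddt_step g m T = P" then show "\<exists>X\<in>Pow (set T \<times> set T). stepX m X T = P \<and> (\<forall>p\<in>set T \<times> set T. Rel g m p = (p \<in> X))"
    by (intro bexI[of _ "{p \<in> set T \<times> set T. Rel g m p}"]) (auto simp: step_stepX)
next
  assume "\<exists>X\<in>Pow (set T \<times> set T). stepX m X T = P \<and> (\<forall>p\<in>set T \<times> set T. Rel g m p = (p \<in> X))"
  then obtain X where X: "X \<subseteq> set T \<times> set T" "stepX m X T = P" "\<forall>p\<in>set T \<times> set T. Rel g m p = (p \<in> X)" by auto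
  have r: "runs (\<lambda>u v. (u,v) \<in> X) T = runs (\<lambda>u v. (u,v) \<in> {p \<in> set T \<times> set T. Rel g m p}) T"
    by (rule runs_cong) (use X in auto)
  have "stepX m X T = stepX m {p \<in> set T \<times> set T. Rel g m p} T"
    unfolding stepX_def r ..
  then show "ddt_step g m T = P" using X(2) step_stepX by metis
qed

lemma step_finite: "finite (range (\<lambda>g. ddt_step g m T))"
proof (rule finite_subset)
  show "range (\<lambda>g. ddt_step g m T) \<subseteq> (\<lambda>X. stepX m X T) ` Pow (set T \<times> set T)"
    by (auto simp: step_stepX)
qed auto

lemma proc_finite: "finite (range (\<lambda>g. proc g l T k))"
proof (induction k)
  case (Suc k)
  have "range (\<lambda>g. proc g l T (Suc k)) \<subseteq> (\<Union>S\<in>range (\<lambda>g. proc g l T k). range (\<lambda>g. ddt_step g (l + Suc k) S))"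
    by auto
  then show ?case
    apply (rule finite_subset)
    apply (rule finite_UN_I)
    using Suc step_finite by auto
qed simp

abbreviation U :: "real measure" where "U \<equiv> uniform_measure lborel {0..1}"

lemma comp_meas: "a \<in> K \<Longrightarrow> (\<lambda>g. g a) \<in> borel_measurable (PiM K (\<lambda>_. U))"
proof -
  assume "a \<in> K"
  then have "(\<lambda>g. g a) \<in> measurable (PiM K (\<lambda>_. U)) U" by (rule measurable_component_singleton)
  moreover have "measurable (PiM K (\<lambda>_. U)) U = measurable (PiM K (\<lambda>_. U)) borel" by (rule measurable_cong_sets) auto
  ultimately show ?thesis by simp
qed

lemma Rel_meas: "ddt_inp (fst p) \<in> K \<Longrightarrow> ddt_inp (snd p) \<in> K \<Longrightarrow> Measurable.pred (PiM K (\<lambda>_. U)) (\<lambda>g. Rel g m p)"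
  unfolding Rel_def pred_def using comp_meas[of "ddt_inp (fst p)" K] comp_meas[of "ddt_inp (snd p)" K]
  by (cases "odd m") (auto intro: borel_measurable_less borel_measurable_eq)

lemma step_meas: "(\<And>u. u \<in> set T \<Longrightarrow> ddt_inp u \<in> K) \<Longrightarrow> Measurable.pred (PiM K (\<lambda>_. U)) (\<lambda>g. ddt_step g m T = P)"
  unfolding step_iff
  apply (intro pred_intros_finite)
   apply simp
  apply (intro pred_intros_logic)
   apply simp
  apply (intro pred_intros_finite)
   apply simp
  apply (intro pred_intros_logic Rel_meas)
  apply auto
  done


lemma proc_meas: "(\<forall>u\<in>set T. tag (ddt_inp u) = l) \<Longrightarrow> {i. l \<le> tag i \<and> tag i < l + k} \<subseteq> K \<Longrightarrow>
  Measurable.pred (PiM K (\<lambda>_. U)) (\<lambda>g. proc g l T k = P)"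
proof (induction k arbitrary: P)
  case 0
  then show ?case unfolding pred_def by (cases "T = P") auto
next
  case (Suc k)
  have e: "(proc g l T (Suc k) = P) \<longleftrightarrow> (\<exists>S\<in>range (\<lambda>h. proc h l T k). proc g l T k = S \<and> ddt_step g (l + Suc k) S = P)" for g
    by auto
  show ?case unfolding e
    apply (intro pred_intros_finite proc_finite pred_intros_logic)
    subgoal apply (rule Suc.IH) using Suc.prems by auto
    subgoal for S apply (rule step_meas) using Suc.prems proc_tag[OF Suc.prems(1)] by fastforce
    done
qed

lemma proc_meas_Q: "(\<forall>u\<in>set T. tag (ddt_inp u) = l) \<Longrightarrow> {i. l \<le> tag i \<and> tag i < l + k} \<subseteq> K \<Longrightarrow>
  Measurable.pred (PiM K (\<lambda>_. U)) (\<lambda>g. Q (proc g l T k))"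
proof -
  assume a: "\<forall>u\<in>set T. tag (ddt_inp u) = l" "{i. l \<le> tag i \<and> tag i < l + k} \<subseteq> K"
  have e: "Q (proc g l T k) \<longleftrightarrow> (\<exists>S\<in>range (\<lambda>h. proc h l T k). proc g l T k = S \<and> Q S)" for g
    by auto
  show ?thesis unfolding e
    by (intro pred_intros_finite proc_finite pred_intros_logic proc_meas[OF a]) (auto simp: pred_def)
qed

lemma probU: "prob_space U"
  by (rule prob_space_uniform_measure) auto

lemma probHS: "prob_space (hash_space :: ('a inp \<Rightarrow> real) measure)"
  unfolding hash_space_def by (rule prob_space_PiM) (rule probU)

lemma space_HS: "space (hash_space :: ('a inp \<Rightarrow> real) measure) = UNIV"
  unfolding hash_space_def by (simp add: space_PiM)

lemma indep_HS: "prob_space.indep_vars (hash_space :: ('a inp \<Rightarrow> real) measure) (\<lambda>_. U) (\<lambda>i h. h i) UNIV"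
proof -
  interpret prob_space "hash_space :: ('a inp \<Rightarrow> real) measure" by (rule probHS)
  have rv: "random_variable U (\<lambda>h. h i)" for i :: "'a inp"
    unfolding hash_space_def by (rule measurable_component_singleton) simp
  have d: "distr (hash_space :: ('a inp \<Rightarrow> real) measure) U (\<lambda>h. h i) = U" for i :: "'a inp"
    unfolding hash_space_def by (rule distr_PiM_component) (auto simp: probU)
  have r: "(\<lambda>x :: 'a inp \<Rightarrow> real. restrict x UNIV) = (\<lambda>x. x)" by (auto simp: restrict_def)
  show ?thesis
    apply (subst indep_vars_iff_distr_eq_PiM)
      apply simp
     apply (rule rv)
    apply (simp add: d)
    apply (simp add: hash_space_def)
    apply (simp only: r distr_id)
    done
qed


lemma indep_prod:
  fixes QA QB :: "('a inp \<Rightarrow> real) \<Rightarrow> bool" and KA KB :: "'a inp set"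
  assumes d: "KA \<inter> KB = {}"
    and m1: "Measurable.pred (PiM KA (\<lambda>_. U)) PA" and m2: "Measurable.pred (PiM KB (\<lambda>_. U)) PB"
    and e1: "\<And>h. QA h = PA (restrict h KA)" and e2: "\<And>h. QB h = PB (restrict h KB)"
  shows "emeasure hash_space {h. QA h \<and> QB h} = emeasure hash_space {h. QA h} * emeasure hash_space {h. QB h}"
proof -
  interpret prob_space "hash_space :: ('a inp \<Rightarrow> real) measure" by (rule probHS)
  have iv: "indep_var (PiM KA (\<lambda>_. U)) (\<lambda>\<omega>. restrict (\<lambda>i. \<omega> i) KA) (PiM KB (\<lambda>_. U)) (\<lambda>\<omega>. restrict (\<lambda>i. \<omega> i) KB)"
    by (rule indep_var_restrict[OF indep_HS]) (use d in auto)
  have s1: "{g\<in>space (PiM KA (\<lambda>_. U)). PA g} \<in> sets (PiM KA (\<lambda>_. U))" using m1 by (simp add: pred_def)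
  have s2: "{g\<in>space (PiM KB (\<lambda>_. U)). PB g} \<in> sets (PiM KB (\<lambda>_. U))" using m2 by (simp add: pred_def)
  note X = indep_varD[OF iv s1 s2]
  have r1: "restrict h KA \<in> space (PiM KA (\<lambda>_. U))" for h :: "'a inp \<Rightarrow> real" by (simp add: space_PiM)
  have r2: "restrict h KB \<in> space (PiM KB (\<lambda>_. U))" for h :: "'a inp \<Rightarrow> real" by (simp add: space_PiM)
  have q: "(\<lambda>x. (restrict (\<lambda>i. x i) KA, restrict (\<lambda>i. x i) KB)) -` ({g\<in>space (PiM KA (\<lambda>_. U)). PA g} \<times> {g\<in>space (PiM KB (\<lambda>_. U)). PB g}) \<inter> space hash_space
     = {h. QA h \<and> QB h}"
    using r1 r2 by (auto simp: space_HS e1 e2)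
  have q1: "(\<lambda>x. restrict (\<lambda>i. x i) KA) -` {g\<in>space (PiM KA (\<lambda>_. U)). PA g} \<inter> space hash_space = {h. QA h}"
    using r1 by (auto simp: space_HS e1)
  have q2: "(\<lambda>x. restrict (\<lambda>i. x i) KB) -` {g\<in>space (PiM KB (\<lambda>_. U)). PB g} \<inter> space hash_space = {h. QB h}"
    using r2 by (auto simp: space_HS e2)
  have "prob {h. QA h \<and> QB h} = prob {h. QA h} * prob {h. QB h}"
    using X unfolding q q1 q2 .
  then show ?thesis by (simp add: emeasure_eq_measure ennreal_mult)
qed


lemma HS_def': "(hash_space :: ('a inp \<Rightarrow> real) measure) = PiM UNIV (\<lambda>_. U)"
  by (simp add: hash_space_def)

lemma HS_sets_Q: "(\<forall>u\<in>set T. tag (ddt_inp u) = l) \<Longrightarrow>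
  {h. Q (proc h l T k)} \<in> sets (hash_space :: ('a inp \<Rightarrow> real) measure)"
proof -
  assume a: "\<forall>u\<in>set T. tag (ddt_inp u) = l"
  have "Measurable.pred (PiM UNIV (\<lambda>_. U)) (\<lambda>g. Q (proc g l T k))"
    by (rule proc_meas_Q[OF a]) auto
  then show ?thesis by (simp add: pred_def HS_def'[symmetric] space_HS)
qed

lemma cond_bound:
  fixes T :: "'a ddt list"
  assumes T: "\<forall>u\<in>set T. tag (ddt_inp u) = l"
    and G: "\<And>S. S \<in> range (\<lambda>h. proc h l T ka) \<Longrightarrow>
       emeasure (hash_space :: ('a inp \<Rightarrow> real) measure) {h. 2 \<le> length (proc h (l + ka) S kb)} \<le> G S"
  shows "emeasure (hash_space :: ('a inp \<Rightarrow> real) measure) {h. 2 \<le> length (proc h l T (ka + kb))}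
     \<le> (\<integral>\<^sup>+ h. G (proc h l T ka) \<partial>hash_space)"
proof -
  define F where "F = range (\<lambda>h. proc h l T ka)"
  have fin: "finite F" unfolding F_def by (rule proc_finite)
  define E where "E S = {h. proc h l T ka = S \<and> 2 \<le> length (proc h (l + ka) S kb)}" for S
  have Stag: "\<forall>u\<in>set S. tag (ddt_inp u) = l + ka" if "S \<in> F" for S
    using that proc_tag[OF T] unfolding F_def by auto
  have sub: "{h. 2 \<le> length (proc h l T (ka + kb))} = (\<Union>S\<in>F. E S)"
    unfolding E_def F_def by (auto simp: proc_add)
  have sA: "{h. proc h l T ka = S} \<in> sets (hash_space :: ('a inp \<Rightarrow> real) measure)" for S
    using HS_sets_Q[OF T, of "\<lambda>X. X = S"] by simp
  have sB: "{h. 2 \<le> length (proc h (l + ka) S kb)} \<in> sets (hash_space :: ('a inp \<Rightarrow> real) measure)" if "S \<in> F" for S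
    using HS_sets_Q[OF Stag[OF that], of "\<lambda>X. 2 \<le> length X"] by simp
  have ind: "emeasure hash_space (E S) = emeasure hash_space {h. proc h l T ka = S} * emeasure hash_space {h. 2 \<le> length (proc h (l + ka) S kb)}"
    if "S \<in> F" for S
    unfolding E_def
  proof (rule indep_prod[where KA="{i. tag i < l + ka}" and KB="{i. l + ka \<le> tag i}"
        and PA="\<lambda>g. proc g l T ka = S" and PB="\<lambda>g. 2 \<le> length (proc g (l + ka) S kb)"])
    show "Measurable.pred (PiM {i. tag i < l + ka} (\<lambda>_. U)) (\<lambda>g. proc g l T ka = S)"
      by (rule proc_meas[OF T]) auto
    show "Measurable.pred (PiM {i. l + ka \<le> tag i} (\<lambda>_. U)) (\<lambda>g. 2 \<le> length (proc g (l + ka) S kb))"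
      by (rule proc_meas_Q[OF Stag[OF that]]) auto
    show "(proc h l T ka = S) = (proc (restrict h {i. tag i < l + ka}) l T ka = S)" for h
      using proc_cong[OF T, where h=h and h'="restrict h {i. tag i < l + ka}" and k=ka] by auto
    show "(2 \<le> length (proc h (l + ka) S kb)) = (2 \<le> length (proc (restrict h {i. l + ka \<le> tag i}) (l + ka) S kb))" for h
      using proc_cong[OF Stag[OF that], where h=h and h'="restrict h {i. l + ka \<le> tag i}" and k=kb] by auto
  qed auto
  have "emeasure hash_space {h. 2 \<le> length (proc h l T (ka + kb))} \<le> (\<Sum>S\<in>F. emeasure hash_space (E S))"
    unfolding sub
  proof (rule emeasure_subadditive_finite[OF fin])
    show "E ` F \<subseteq> sets hash_space"
    proof
      fix X assume "X \<in> E ` F"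
      then obtain S where S: "S \<in> F" "X = E S" by auto
      have "E S = {h. proc h l T ka = S} \<inter> {h. 2 \<le> length (proc h (l + ka) S kb)}"
        unfolding E_def by auto
      then show "X \<in> sets hash_space" using S sA sB by auto
    qed
  qed
  also have "\<dots> \<le> (\<Sum>S\<in>F. emeasure hash_space {h. proc h l T ka = S} * G S)"
    by (intro sum_mono) (auto simp: ind F_def intro!: mult_left_mono G)
  also have "\<dots> = (\<Sum>S\<in>F. \<integral>\<^sup>+ h. G S * indicator {h. proc h l T ka = S} h \<partial>hash_space)"
    by (intro sum.cong refl) (simp add: nn_integral_cmult_indicator[OF sA] mult.commute)
  also have "\<dots> = (\<integral>\<^sup>+ h. (\<Sum>S\<in>F. G S * indicator {h. proc h l T ka = S} h) \<partial>hash_space)"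
    apply (rule nn_integral_sum[symmetric])
    subgoal for S using sA[of S] by measurable
    done
  also have "\<dots> = (\<integral>\<^sup>+ h. G (proc h l T ka) \<partial>hash_space)"
  proof (rule nn_integral_cong)
    fix h :: "'a inp \<Rightarrow> real"
    have "(\<Sum>S\<in>F. G S * indicator {h. proc h l T ka = S} h) = (\<Sum>S\<in>F. if S = proc h l T ka then G S else 0)"
      by (intro sum.cong refl) (auto simp: indicator_def)
    also have "\<dots> = G (proc h l T ka)" using fin by (simp add: sum.delta' F_def)
    finally show "(\<Sum>S\<in>F. G S * indicator {h. proc h l T ka = S} h) = G (proc h l T ka)" .
  qed
  finally show ?thesis .
qed


lemma adjp_map: "adjp P (map g L) = adjp (\<lambda>a b. P (g a) (g b)) L"
  by (induction L rule: induct_list012) auto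

lemma adjp_mono: "adjp P L \<Longrightarrow> (\<And>a b. a \<in> set L \<Longrightarrow> b \<in> set L \<Longrightarrow> P a b \<Longrightarrow> Q a b) \<Longrightarrow> adjp Q L"
  by (induction L rule: induct_list012) auto

lemma dup_adj: "odd m \<Longrightarrow> adjp (\<lambda>u v. ddt_inp u \<noteq> ddt_inp v) (ddt_step h m T)"
proof -
  assume m: "odd m"
  have a: "adjp (\<lambda>r1 r2. h (ddt_inp (hd r1)) \<noteq> h (ddt_inp (hd r2))) (runs (\<lambda>u v. h (ddt_inp u) = h (ddt_inp v)) T)"
    by (rule runs_eq_adj)
  have "adjp (\<lambda>r1 r2. ddt_inp (DupN m r1) \<noteq> ddt_inp (DupN m r2)) (runs (\<lambda>u v. h (ddt_inp u) = h (ddt_inp v)) T)"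
  proof (rule adjp_mono[OF a])
    fix r1 r2 assume r: "r1 \<in> set (runs (\<lambda>u v. h (ddt_inp u) = h (ddt_inp v)) T)" "r2 \<in> set (runs (\<lambda>u v. h (ddt_inp u) = h (ddt_inp v)) T)"
      and ne: "h (ddt_inp (hd r1)) \<noteq> h (ddt_inp (hd r2))"
    have "r1 \<noteq> []" "r2 \<noteq> []" using r runs_nonempty by metis+
    then obtain c1 cs1 c2 cs2 where "r1 = c1 # cs1" "r2 = c2 # cs2" by (meson list.exhaust)
    then show "ddt_inp (DupN m r1) \<noteq> ddt_inp (DupN m r2)" using ne by auto
  qed
  then show ?thesis using m by (simp add: ddt_step_def adjp_map)
qed

lemma runs_length_le: "length (runs R xs) \<le> length xs"
  by (induction R xs rule: runs.induct) (auto split: list.splits)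

lemma step_length_le: "length (ddt_step h m T) \<le> length T"
  by (simp add: ddt_step_def runs_length_le)

lemma inc_len: "even m \<Longrightarrow> length (ddt_step h m T) - 1 = (\<Sum>j<length T - 1. if h (ddt_inp (T!j)) < h (ddt_inp (T!Suc j)) then 0 else 1)"
  unfolding ddt_step_def using runs_len[of "\<lambda>u v. h (ddt_inp u) < h (ddt_inp v)" T] by simp

lemma HS_sets_lt: "{h. \<not> h a < h b} \<in> sets (hash_space :: ('a inp \<Rightarrow> real) measure)"
proof -
  have "{h \<in> space (PiM UNIV (\<lambda>_. U)). h a < h b} \<in> sets (PiM UNIV (\<lambda>_. U))"
    using comp_meas[of a UNIV] comp_meas[of b UNIV] by (auto intro: borel_measurable_less)
  then have "space (PiM UNIV (\<lambda>_. U)) - {h \<in> space (PiM UNIV (\<lambda>_. U)). h a < h b} \<in> sets (PiM UNIV (\<lambda>_. U))"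
    by auto
  then show ?thesis by (simp add: HS_def'[symmetric] space_HS set_diff_eq)
qed

lemma U_lt: "emeasure U {..<1/2} = ennreal (1/2)"
proof -
  have e: "{0..1} \<inter> {..<1/2::real} = {0..<1/2}" by auto
  have "emeasure U {..<1/2} = emeasure lborel ({0..1} \<inter> {..<1/2::real}) / emeasure lborel {0..1::real}"
    by (rule emeasure_uniform_measure) auto
  then show ?thesis unfolding e by (simp add: divide_ennreal_def)
qed

lemma U_ge: "emeasure U {1/2..} = ennreal (1/2)"
proof -
  have e: "{0..1} \<inter> {(1/2::real)..} = {1/2..1}" by auto
  have "emeasure U {1/2..} = emeasure lborel ({0..1} \<inter> {(1/2::real)..}) / emeasure lborel {0..1::real}"
    by (rule emeasure_uniform_measure) auto
  then show ?thesis unfolding e by (simp add: divide_ennreal_def)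
qed

lemma desc_prob: "a \<noteq> b \<Longrightarrow> emeasure (hash_space :: ('a inp \<Rightarrow> real) measure) {h. \<not> h a < h b} \<le> ennreal (3/4)"
proof -
  assume ab: "a \<noteq> b"
  interpret P: product_prob_space "\<lambda>_::'a inp. U" UNIV
    by (simp add: product_prob_space_def product_sigma_finite_def probU prob_space_imp_sigma_finite product_prob_space_axioms_def)
  interpret prob_space "hash_space :: ('a inp \<Rightarrow> real) measure" by (rule probHS)
  define X where "X i = (if i = a then {..<1/2} else {1/2::real..})" for i
  define E where "E = {x \<in> space (PiM UNIV (\<lambda>_::'a inp. U)). \<forall>i\<in>{a,b}. x i \<in> X i}"
  have "emeasure (PiM UNIV (\<lambda>_::'a inp. U)) E = (\<Prod>i\<in>{a,b}. emeasure U (X i))"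
    unfolding E_def by (rule P.emeasure_PiM_Collect) (auto simp: X_def)
  also have "\<dots> = emeasure U (X a) * emeasure U (X b)" using ab by (simp del: emeasure_uniform_measure)
  also have "\<dots> = ennreal (1/2) * ennreal (1/2)" using ab by (simp add: X_def U_lt U_ge del: emeasure_uniform_measure)
  also have "\<dots> = ennreal (1/4)" using ennreal_mult[of "1/2" "1/2"] by simp
  finally have eE: "emeasure hash_space E = ennreal (1/4)" by (simp add: HS_def')
  have sE: "E \<in> sets hash_space" unfolding E_def HS_def'
    by (rule sets.sets_Collect_finite_All) (auto simp: X_def intro!: sets_Collect_single)
  then have pE: "prob E = 1/4" using eE by (simp add: emeasure_eq_measure)
  have "{h. \<not> h a < h b} \<subseteq> space hash_space - E"
    using ab by (auto simp: E_def X_def space_HS HS_def'[symmetric])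
  then have "prob {h. \<not> h a < h b} \<le> prob (space hash_space - E)"
    using sE by (intro finite_measure_mono) auto
  also have "\<dots> = 3/4" using prob_compl[OF sE] pE by simp
  finally show ?thesis by (simp add: emeasure_eq_measure)
qed


lemma adjp_nth: "adjp P L \<Longrightarrow> Suc j < length L \<Longrightarrow> P (L!j) (L!Suc j)"
proof (induction P L arbitrary: j rule: adjp.induct)
  case (1 P a b L)
  show ?case
  proof (cases j)
    case 0 then show ?thesis using 1 by simp
  next
    case (Suc j') then show ?thesis using 1 by simp
  qed
qed auto

lemma inc_exp:
  assumes adj: "adjp (\<lambda>u v. ddt_inp u \<noteq> ddt_inp v) T" and m: "even m"
  shows "(\<integral>\<^sup>+ h. of_nat (length (ddt_step h m T) - 1) * c \<partial>(hash_space :: ('a inp \<Rightarrow> real) measure))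
     \<le> of_nat (length T - 1) * ennreal (3/4) * c"
proof -
  define D where "D j = {h :: 'a inp \<Rightarrow> real. \<not> h (ddt_inp (T!j)) < h (ddt_inp (T!Suc j))}" for j
  have sD: "D j \<in> sets (hash_space :: ('a inp \<Rightarrow> real) measure)" for j unfolding D_def by (rule HS_sets_lt)
  have pw: "of_nat (length (ddt_step h m T) - 1) * c = (\<Sum>j<length T - 1. c * indicator (D j) h)" for h
  proof -
    have "of_nat (length (ddt_step h m T) - 1) = (\<Sum>j<length T - 1. (indicator (D j) h :: ennreal))"
      unfolding inc_len[OF m] of_nat_sum by (intro sum.cong refl) (auto simp: D_def indicator_def)
    then show ?thesis by (simp add: sum_distrib_left mult.commute)
  qed
  have "(\<integral>\<^sup>+ h. of_nat (length (ddt_step h m T) - 1) * c \<partial>hash_space) = (\<integral>\<^sup>+ h. (\<Sum>j<length T - 1. c * indicator (D j) h) \<partial>hash_space)"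
    by (intro nn_integral_cong pw)
  also have "\<dots> = (\<Sum>j<length T - 1. \<integral>\<^sup>+ h. c * indicator (D j) h \<partial>hash_space)"
    apply (rule nn_integral_sum)
    subgoal for j using sD[of j] by measurable
    done
  also have "\<dots> = (\<Sum>j<length T - 1. c * emeasure hash_space (D j))"
    by (intro sum.cong refl nn_integral_cmult_indicator sD)
  also have "\<dots> \<le> (\<Sum>j<length T - 1. c * ennreal (3/4))"
  proof (intro sum_mono mult_left_mono)
    fix j assume "j \<in> {..<length T - 1}"
    then have "ddt_inp (T!j) \<noteq> ddt_inp (T!Suc j)" using adjp_nth[OF adj, of j] by auto
    then show "emeasure hash_space (D j) \<le> ennreal (3/4)" unfolding D_def by (rule desc_prob)
  qed auto
  also have "\<dots> = of_nat (length T - 1) * ennreal (3/4) * c" by (simp add: ac_simps)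
  finally show ?thesis .
qed

lemma proc2: "proc h l T 2 = ddt_step h (l + 2) (ddt_step h (l + 1) T)"
  by (simp add: numeral_2_eq_2)

lemma claim:
  fixes T :: "'a ddt list"
  shows "odd l \<Longrightarrow> (\<forall>u\<in>set T. tag (ddt_inp u) = l) \<Longrightarrow> adjp (\<lambda>u v. ddt_inp u \<noteq> ddt_inp v) T \<Longrightarrow>
    emeasure (hash_space :: ('a inp \<Rightarrow> real) measure) {h. 2 \<le> length (proc h l T (2 * k))}
      \<le> of_nat (length T - 1) * ennreal (3/4) ^ k"
proof (induction k arbitrary: l T)
  case 0
  interpret prob_space "hash_space :: ('a inp \<Rightarrow> real) measure" by (rule probHS)
  show ?case
  proof (cases "2 \<le> length T")
    case True
    then have "{h :: 'a inp \<Rightarrow> real. 2 \<le> length (proc h l T (2 * 0))} = space hash_space" by (simp add: space_HS)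
    moreover have "(1::ennreal) \<le> of_nat (length T - 1)" using True by simp
    ultimately show ?thesis by (simp add: emeasure_space_1)
  next
    case False
    then show ?thesis by simp
  qed
next
  case (Suc k)
  have e: "2 * Suc k = 2 + 2 * k" by simp
  have "emeasure (hash_space :: ('a inp \<Rightarrow> real) measure) {h. 2 \<le> length (proc h l T (2 + 2 * k))}
      \<le> (\<integral>\<^sup>+ h. of_nat (length (proc h l T 2) - 1) * ennreal (3/4) ^ k \<partial>hash_space)"
  proof (rule cond_bound[OF Suc.prems(2)])
    fix S assume "S \<in> range (\<lambda>h. proc h l T 2)"
    then obtain h0 where S: "S = proc h0 l T 2" by auto
    have o: "odd (l + 2)" using Suc.prems(1) by simp
    have t: "\<forall>u\<in>set S. tag (ddt_inp u) = l + 2" using proc_tag[OF Suc.prems(2)] S by auto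
    have a: "adjp (\<lambda>u v. ddt_inp u \<noteq> ddt_inp v) S" unfolding S proc2 by (rule dup_adj[OF o])
    show "emeasure hash_space {h. 2 \<le> length (proc h (l + 2) S (2 * k))} \<le> of_nat (length S - 1) * ennreal (3/4) ^ k"
      by (rule Suc.IH[OF o t a])
  qed
  also have "\<dots> \<le> (\<integral>\<^sup>+ h. of_nat (length (ddt_step h (l + 1) T) - 1) * ennreal (3/4) ^ k \<partial>hash_space)"
  proof (rule nn_integral_mono)
    fix h :: "'a inp \<Rightarrow> real"
    have "length (proc h l T 2) \<le> length (ddt_step h (l + 1) T)" unfolding proc2 by (rule step_length_le)
    then show "of_nat (length (proc h l T 2) - 1) * ennreal (3/4) ^ k \<le> of_nat (length (ddt_step h (l + 1) T) - 1) * ennreal (3/4) ^ k"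
      by (intro mult_right_mono) auto
  qed
  also have "\<dots> \<le> of_nat (length T - 1) * ennreal (3/4) * ennreal (3/4) ^ k"
    by (rule inc_exp[OF Suc.prems(3)]) (use Suc.prems(1) in simp)
  also have "\<dots> = of_nat (length T - 1) * ennreal (3/4) ^ Suc k" by (simp add: mult.assoc)
  finally show ?case unfolding e .
qed


lemma level0_proc: "ddt_level h x l = proc h 0 (map Lf x) l"
  using level_proc[of h x 0 l] by simp

lemma Lf_tag: "\<forall>u\<in>set (map Lf x). tag (ddt_inp u) = 0"
  by auto

lemma level_ne: "x \<noteq> [] \<Longrightarrow> ddt_level h x l \<noteq> []"
proof (induction l)
  case (Suc l)
  then obtain y ys where "ddt_level h x l = y # ys" by (meson list.exhaust)
  then show ?case by (auto simp: ddt_step_def runs_Cons_ne)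
qed simp

lemma inc_path_list_le: "(\<And>c i. c \<in> set cs \<Longrightarrow> inc_path c i \<le> B) \<Longrightarrow> inc_path_list cs i \<le> B"
  by (induction cs arbitrary: i) auto

lemma runs_sub: "r \<in> set (runs R xs) \<Longrightarrow> set r \<subseteq> set xs"
  using runs_concat[of R xs] by (metis concat.simps set_concat UN_upper)

lemma level_inc_path: "t \<in> set (ddt_level h x l) \<Longrightarrow> inc_path t i \<le> l"
proof (induction l arbitrary: t i)
  case 0 then show ?case by auto
next
  case (Suc l)
  then obtain r where r: "r \<in> set (runs (\<lambda>u v. h (ddt_inp u) = h (ddt_inp v)) (ddt_level h x l)) \<and> t = DupN (Suc l) r
     \<or> r \<in> set (runs (\<lambda>u v. h (ddt_inp u) < h (ddt_inp v)) (ddt_level h x l)) \<and> t = IncN (Suc l) r"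
    by (auto simp: ddt_step_def split: if_splits)
  have "\<forall>c\<in>set r. c \<in> set (ddt_level h x l)" using r runs_sub by blast
  then have "inc_path_list r i \<le> l" by (intro inc_path_list_le) (auto intro: Suc.IH)
  then show ?case using r by auto
qed

lemma HS_pred_level: "Measurable.pred (hash_space :: ('a inp \<Rightarrow> real) measure) (\<lambda>h. Q (ddt_level h (x :: 'a list) l))"
  using HS_sets_Q[OF Lf_tag, where Q=Q and k=l] unfolding pred_def level0_proc space_HS by simp



lemma level_bound:
  fixes x :: "'a list"
  shows "emeasure (hash_space :: ('a inp \<Rightarrow> real) measure) {h. 2 \<le> length (ddt_level h x (1 + 2 * K))}
    \<le> of_nat (length x - 1) * ennreal (3/4) ^ K"
proof -
  interpret prob_space "hash_space :: ('a inp \<Rightarrow> real) measure" by (rule probHS)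
  have G: "emeasure (hash_space :: ('a inp \<Rightarrow> real) measure) {h. 2 \<le> length (proc h (0 + 1) S (2 * K))} \<le> of_nat (length x - 1) * ennreal (3/4) ^ K"
    if "S \<in> range (\<lambda>h. proc h 0 (map Lf x) 1)" for S
  proof -
    from that obtain h0 where "S = proc h0 0 (map Lf x) 1" by blast
    then have S: "S = ddt_step h0 1 (map Lf x)" by simp
    have t: "\<forall>u\<in>set S. tag (ddt_inp u) = 0 + 1" using S step_tag by auto
    have a: "adjp (\<lambda>u v. ddt_inp u \<noteq> ddt_inp v) S" unfolding S by (rule dup_adj) simp
    have "emeasure (hash_space :: ('a inp \<Rightarrow> real) measure) {h. 2 \<le> length (proc h (0 + 1) S (2 * K))} \<le> of_nat (length S - 1) * ennreal (3/4) ^ K"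
      by (rule claim[OF _ t a]) simp
    also have "\<dots> \<le> of_nat (length x - 1) * ennreal (3/4) ^ K"
      using step_length_le[of h0 1 "map Lf x"] S by (intro mult_right_mono) auto
    finally show ?thesis .
  qed
  have "emeasure (hash_space :: ('a inp \<Rightarrow> real) measure) {h. 2 \<le> length (proc h 0 (map Lf x) (1 + 2 * K))}
    \<le> (\<integral>\<^sup>+ h. of_nat (length x - 1) * ennreal (3/4) ^ K \<partial>(hash_space :: ('a inp \<Rightarrow> real) measure))"
    using cond_bound[OF Lf_tag[of x] G] by simp
  also have "\<dots> = of_nat (length x - 1) * ennreal (3/4) ^ K" by (simp add: emeasure_space_1)
  finally show ?thesis by (simp add: level0_proc)
qed



lemma num_bound:
  fixes c :: real and n :: nat
  assumes c: "c > 0" and n: "n \<ge> 2"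
  defines "m \<equiv> nat \<lceil>(c + 1) * log 2 (real n)\<rceil>"
  shows "real (n - 1) * (3/4) ^ (3 * m) \<le> real n powr (- c)"
proof -
  have n0: "real n > 0" using n by simp
  have lg: "log 2 (real n) \<ge> 1" using n by simp
  have y0: "(c + 1) * log 2 (real n) \<ge> 0" using c lg by simp
  then have cg: "\<lceil>(c + 1) * log 2 (real n)\<rceil> \<ge> 0" by simp
  have "real m = real_of_int \<lceil>(c + 1) * log 2 (real n)\<rceil>" unfolding m_def using cg by simp
  then have mge: "real m \<ge> (c + 1) * log 2 (real n)" using le_of_int_ceiling by simp
  have e: "(3/4::real)^3 = 27/64" by (simp add: power3_eq_cube)
  have "(3/4::real) ^ (3 * m) = (27/64) ^ m" by (simp only: power_mult e)
  also have "\<dots> \<le> (1/2) ^ m" by (intro power_mono) auto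
  also have "(1/2::real) ^ m = 1 / 2 powr real m" by (simp add: powr_realpow power_one_over)
  also have "\<dots> \<le> 1 / 2 powr ((c + 1) * log 2 (real n))"
    using mge by (intro divide_left_mono powr_mono) auto
  also have "2 powr ((c + 1) * log 2 (real n)) = (2 powr log 2 (real n)) powr (c + 1)"
    by (simp add: powr_powr mult.commute)
  also have "2 powr log 2 (real n) = real n" using n0 by simp
  finally have a: "(3/4::real) ^ (3 * m) \<le> 1 / real n powr (c + 1)" .
  have "real (n - 1) * (3/4) ^ (3 * m) \<le> real n * (1 / real n powr (c + 1))"
    using a n by (intro mult_mono) auto
  also have "\<dots> = real n powr (- c)"
  proof -
    have "real n powr (c + 1) = real n powr c * real n" using n0 by (simp add: powr_add)
    then show ?thesis using n0 by (simp add: powr_minus_divide)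
  qed
  finally show ?thesis .
qed


theorem mainTheorem9:
  fixes c :: real
  assumes "c > 0"
  shows "\<exists>C::real. \<forall>n::nat. n \<ge> 2 \<longrightarrow> (\<forall>x::'a list. length x = n \<longrightarrow>
           (\<forall>i\<in>{1..n}.
              measure (hash_space :: ('a inp \<Rightarrow> real) measure)
                {h \<in> space hash_space. ddt_terminates h x \<and>
                   real (inc_path (ddt_root h x) (i - 1)) \<le> C * log 2 (real n)}
              \<ge> 1 - real n powr (- c)))"
proof (intro exI[of _ "13 + 6 * c"] allI impI ballI)
  fix n :: nat and x :: "'a list" and i
  assume n: "2 \<le> n" and lx: "length x = n" and i: "i \<in> {1..n}"
  interpret prob_space "hash_space :: ('a inp \<Rightarrow> real) measure" by (rule probHS)
  define m where "m = nat \<lceil>(c + 1) * log 2 (real n)\<rceil>"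
  define L where "L = 1 + 2 * (3 * m)"
  define B where "B = (13 + 6 * c) * log 2 (real n)"
  have xne: "x \<noteq> []" using n lx by auto
  have lg: "log 2 (real n) \<ge> 1" using n by simp
  have LB: "real L \<le> B"
  proof -
    have y0: "(c + 1) * log 2 (real n) \<ge> 0" using assms lg by simp
    then have cg: "\<lceil>(c + 1) * log 2 (real n)\<rceil> \<ge> 0" by simp
    have "real m = real_of_int \<lceil>(c + 1) * log 2 (real n)\<rceil>" unfolding m_def using cg by simp
    then have "real m \<le> (c + 1) * log 2 (real n) + 1" by linarith
    then have "real L \<le> 7 + 6 * (c + 1) * log 2 (real n)" unfolding L_def by (simp add: algebra_simps)
    also have "\<dots> \<le> B" unfolding B_def using lg assms by (simp add: algebra_simps)
    finally show ?thesis .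
  qed
  define E where "E = {h \<in> space (hash_space :: ('a inp \<Rightarrow> real) measure). ddt_terminates h x \<and>
                   real (inc_path (ddt_root h x) (i - 1)) \<le> B}"
  define Bad where "Bad = {h :: 'a inp \<Rightarrow> real. 2 \<le> length (ddt_level h x L)}"
  have Eeq: "E = {h \<in> space hash_space. \<exists>l. length (ddt_level h x l) = 1 \<and> (\<forall>l'\<in>{..<l}. length (ddt_level h x l') \<noteq> 1)
        \<and> real (inc_path (hd (ddt_level h x l)) (i - 1)) \<le> B}"
  proof -
    have X: "(ddt_terminates h x \<and> real (inc_path (ddt_root h x) (i - 1)) \<le> B) \<longleftrightarrow>
      (\<exists>l. length (ddt_level h x l) = 1 \<and> (\<forall>l'\<in>{..<l}. length (ddt_level h x l') \<noteq> 1)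
        \<and> real (inc_path (hd (ddt_level h x l)) (i - 1)) \<le> B)" for h
    proof
      assume a: "ddt_terminates h x \<and> real (inc_path (ddt_root h x) (i - 1)) \<le> B"
      let ?l = "ddt_height h x"
      have ex: "\<exists>l. length (ddt_level h x l) = 1" using a unfolding ddt_terminates_def by blast
      have "length (ddt_level h x ?l) = 1" unfolding ddt_height_def by (rule LeastI_ex[OF ex])
      moreover have "\<forall>l'\<in>{..<?l}. length (ddt_level h x l') \<noteq> 1"
        unfolding ddt_height_def using not_less_Least[of _ "\<lambda>l. length (ddt_level h x l) = 1"] by blast
      ultimately show "\<exists>l. length (ddt_level h x l) = 1 \<and> (\<forall>l'\<in>{..<l}. length (ddt_level h x l') \<noteq> 1)
        \<and> real (inc_path (hd (ddt_level h x l)) (i - 1)) \<le> B"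
        using a unfolding ddt_root_def by blast
    next
      assume "\<exists>l. length (ddt_level h x l) = 1 \<and> (\<forall>l'\<in>{..<l}. length (ddt_level h x l') \<noteq> 1)
        \<and> real (inc_path (hd (ddt_level h x l)) (i - 1)) \<le> B"
      then obtain l where l: "length (ddt_level h x l) = 1" "\<forall>l'\<in>{..<l}. length (ddt_level h x l') \<noteq> 1"
        "real (inc_path (hd (ddt_level h x l)) (i - 1)) \<le> B" by blast
      have "ddt_height h x = l" unfolding ddt_height_def
        by (rule Least_equality) (use l in \<open>auto simp: not_less[symmetric]\<close>)
      then show "ddt_terminates h x \<and> real (inc_path (ddt_root h x) (i - 1)) \<le> B"
        using l unfolding ddt_terminates_def ddt_root_def by auto
    qed
    show ?thesis unfolding E_def using X by blast
  qed
  have Emeas: "E \<in> sets hash_space"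
  proof -
    have "Measurable.pred hash_space (\<lambda>h. \<exists>l. length (ddt_level h x l) = 1 \<and> (\<forall>l'\<in>{..<l}. length (ddt_level h x l') \<noteq> 1)
        \<and> real (inc_path (hd (ddt_level h x l)) (i - 1)) \<le> B)"
    proof (rule pred_intros_countable(2))
      fix l
      have p1: "Measurable.pred hash_space (\<lambda>h. length (ddt_level h x l) = 1)"
        using HS_pred_level[of "\<lambda>X. length X = 1" x l] by simp
      have p2: "Measurable.pred hash_space (\<lambda>h. \<forall>l'\<in>{..<l}. length (ddt_level h x l') \<noteq> 1)"
      proof -
        have "Measurable.pred hash_space (\<lambda>h. length (ddt_level h x l') \<noteq> 1)" for l'
          using HS_pred_level[of "\<lambda>X. length X \<noteq> 1" x l'] by simp
        then show ?thesis by (intro pred_intros_finite(3)) auto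
      qed
      have p3: "Measurable.pred hash_space (\<lambda>h. real (inc_path (hd (ddt_level h x l)) (i - 1)) \<le> B)"
        using HS_pred_level[of "\<lambda>X. real (inc_path (hd X) (i - 1)) \<le> B" x l] by simp
      show "Measurable.pred hash_space (\<lambda>h. length (ddt_level h x l) = 1 \<and> (\<forall>l'\<in>{..<l}. length (ddt_level h x l') \<noteq> 1)
        \<and> real (inc_path (hd (ddt_level h x l)) (i - 1)) \<le> B)"
        using p1 p2 p3 by (intro pred_intros_logic(3))
    qed
    then show ?thesis unfolding Eeq pred_def .
  qed
  have Bmeas: "Bad \<in> sets hash_space"
    using HS_pred_level[of "\<lambda>X. 2 \<le> length X" x L] unfolding pred_def Bad_def space_HS by simp
  have sub: "space hash_space - Bad \<subseteq> E"
  proof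
    fix h assume h: "h \<in> space hash_space - Bad"
    have ne: "ddt_level h x L \<noteq> []" using level_ne[OF xne] .
    have l1: "length (ddt_level h x L) = 1" proof -
      have "length (ddt_level h x L) \<noteq> 0" using ne by simp
      moreover have "\<not> 2 \<le> length (ddt_level h x L)" using h unfolding Bad_def by simp
      ultimately show ?thesis by linarith
    qed
    then have tm: "ddt_terminates h x" unfolding ddt_terminates_def by blast
    have hl: "ddt_height h x \<le> L" unfolding ddt_height_def by (rule Least_le) (rule l1)
    have "ddt_root h x \<in> set (ddt_level h x (ddt_height h x))"
      unfolding ddt_root_def using level_ne[OF xne] by simp
    then have "inc_path (ddt_root h x) (i - 1) \<le> ddt_height h x" by (rule level_inc_path)
    then have "real (inc_path (ddt_root h x) (i - 1)) \<le> real L" using hl by linarith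
    then show "h \<in> E" using LB tm h unfolding E_def by auto
  qed
  have pB: "prob Bad \<le> real (n - 1) * (3/4) ^ (3 * m)"
  proof -
    have "emeasure hash_space Bad \<le> of_nat (length x - 1) * ennreal (3/4) ^ (3 * m)"
      unfolding Bad_def L_def by (rule level_bound)
    also have "\<dots> = ennreal (real (n - 1) * (3/4) ^ (3 * m))"
      using lx by (simp add: ennreal_mult ennreal_power ennreal_of_nat_eq_real_of_nat)
    finally show ?thesis by (simp add: emeasure_eq_measure)
  qed
  have "1 - real n powr (- c) \<le> 1 - prob Bad" using pB num_bound[OF assms n] unfolding m_def by linarith
  also have "\<dots> = prob (space hash_space - Bad)" using prob_compl[OF Bmeas] by simp
  also have "\<dots> \<le> prob E" using sub Emeas by (intro finite_measure_mono)
  finally show "1 - real n powr (- c) \<le> measure hash_space {h \<in> space hash_space. ddt_terminates h x \<and>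
                   real (inc_path (ddt_root h x) (i - 1)) \<le> (13 + 6 * c) * log 2 (real n)}"
    unfolding E_def B_def .
qed


end
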